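(* Let $f\in V\hat{A}$. Let $s_0\in\mathrm{Sing}(f)$, and let $O=\{f^i(s_0):i\in\mathbb Z\}$ be its orbit. Suppose $s_0$ is the only singularity of $f$ lying in $O$, and write $s_i=f^i(s_0)$. (a) If $O$ is infinite, then $\mathrm{Sing}(f^n)\cap O=\{s_{-n+1},\dots,s_{-1},s_0\}$ for every $n\ge1$. In particular, $f$ has infinite order and $|\mathrm{Sing}(f^n)|\ge n$ for all $n\ge1$. (b) If $O$ is finite of cardinality $m$, then $\mathrm{Sing}(f^n)\cap O=\{s_{-n+1},\dots,s_0\}$ for $1\le n\le m$. In particular, $s_0$ is a singularity of $f^m$ that is fixed by $f^m$.
   Context: Let $\mathfrak C=\{0,1\}^{\mathbb N}$ be the Cantor set, with points labelled by numbers in $[0,1]$ via binary expansion. A dyadic $p\in(0,1)$ corresponds to two points: $p^-$ (binary expansion eventually $1$) and $p^+$ (binary expansion eventually $0$). The Belk–Hyde–Matucci group $V\hat{A}$ is the group of bijections $f$ of $\mathfrak C$ such that: - $f$ (drawn as a map on $[0,1]$) is piecewise linear with slopes powers of $2$ and pieces beginning and ending at points with dyadic coordinates, where breakpoints may accumulate only at finitely many points, called the singularities of $f$; - each singularity has the form $p^\pm$ with $p$ dyadic, and its image has the form $q^\pm$ with the same sign; - on a sufficiently small one-sided neighborhood of a singularity $p^\pm$ with $f(p^\pm)=q^\pm$, $f$ is continuous and satisfies $f\circ L_p=L_q\circ f$, where $L_r(x)=2(x-r)+r$. $\mathrm{Sing}(f)$ denotes the finite set of singularities of $f$. Products are written as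 $fg=g\circ f$. *)

theory Defs
  imports Main
begin

text \<open>Points of the Cantor set are infinite binary sequences; bit i is the (i+1)-st
binary digit of the coordinate in [0,1].\<close>
type_synonym cantor = "nat \<Rightarrow> bool"

definition cat :: "bool list \<Rightarrow> cantor \<Rightarrow> cantor" where
  "cat u w = (\<lambda>i. if i < length u then u ! i else w (i - length u))"

definition has_prefix :: "cantor \<Rightarrow> bool list \<Rightarrow> bool" where
  "has_prefix x u \<longleftrightarrow> (\<forall>i < length u. x i = u ! i)"

text \<open>f is locally linear with slope a power of 2 and dyadic pieces near x:
  on some cylinder neighbourhood [u] of x, f acts as the prefix replacement uw \<mapsto> vw.\<close>
definition loc_linear :: "(cantor \<Rightarrow> cantor) \<Rightarrow> cantor \<Rightarrow> bool" where
  "loc_linear f x \<longleftrightarrow> (\<exists>u v. has_prefix x u \<and> (\<forall>w. f (cat u w) = cat v w))"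

text \<open>Singularities: points at which breakpoints accumulate, i.e. points with no
  neighbourhood on which f is linear.\<close>
definition Sing :: "(cantor \<Rightarrow> cantor) \<Rightarrow> cantor set" where
  "Sing f = {x. \<not> loc_linear f x}"

text \<open>Dyadic points p^\<plusminus>, p \<in> (0,1): eventually constant, but not constant.\<close>
definition ev_const :: "cantor \<Rightarrow> bool" where
  "ev_const s \<longleftrightarrow> (\<exists>n. \<forall>i\<ge>n. s i = s n)"

definition dyadic_pt :: "cantor \<Rightarrow> bool" where
  "dyadic_pt s \<longleftrightarrow> ev_const s \<and> \<not> (\<forall>i. s i = s 0)"

definition tailstart :: "cantor \<Rightarrow> nat" where
  "tailstart s = (LEAST n. \<forall>i\<ge>n. s i = s n)"

text \<open>The sign of a dyadic point: True for p^- (eventually 1), False for p^+.\<close>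
definition tailbit :: "cantor \<Rightarrow> bool" where
  "tailbit s = s (tailstart s)"

text \<open>The map L_p(x) = 2(x-p)+p near s = p^\<plusminus>: writing s = u c c c ..., with u not
  ending in c, it is u c w \<mapsto> u w (deletion of the digit at position |u|).\<close>
definition Lmap :: "cantor \<Rightarrow> cantor \<Rightarrow> cantor" where
  "Lmap s x = (\<lambda>i. if i < tailstart s then x i else x (Suc i))"

definition cont_at :: "(cantor \<Rightarrow> cantor) \<Rightarrow> cantor \<Rightarrow> bool" where
  "cont_at f x \<longleftrightarrow> (\<forall>m. \<exists>n. \<forall>y. (\<forall>i<n. y i = x i) \<longrightarrow> (\<forall>i<m. f y i = f x i))"

definition VA :: "(cantor \<Rightarrow> cantor) \<Rightarrow> bool" where
  "VA f \<longleftrightarrow> bij f \<and> finite (Sing f) \<and>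
     (\<forall>s \<in> Sing f. dyadic_pt s \<and> dyadic_pt (f s) \<and> tailbit (f s) = tailbit s \<and>
        (\<exists>n. \<forall>x. (\<forall>i<n. x i = s i) \<longrightarrow>
              cont_at f x \<and> f (Lmap s x) = Lmap (f s) (f x)))"

definition fpow :: "(cantor \<Rightarrow> cantor) \<Rightarrow> int \<Rightarrow> cantor \<Rightarrow> cantor" where
  "fpow f i = (if 0 \<le> i then f ^^ nat i else (inv f) ^^ nat (- i))"

definition orbit :: "(cantor \<Rightarrow> cantor) \<Rightarrow> cantor \<Rightarrow> cantor set" where
  "orbit f s = {fpow f i s | i. True}"

end

theory Submission imports Defs begin

definition pre :: "cantor \<Rightarrow> nat \<Rightarrow> bool list" where
  "pre x N = map x [0..<N]"

lemma cat_append: "cat u (cat t w) = cat (u @ t) w"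
  by (auto simp: cat_def nth_append fun_eq_iff)

lemma cat_Nil: "cat [] w = w"
  by (simp add: cat_def)

lemma has_prefix_pre: "has_prefix x u \<Longrightarrow> u = pre x (length u)"
  by (auto simp: has_prefix_def pre_def intro!: nth_equalityI)

lemma has_prefix_pre2: "has_prefix x (pre x N)"
  by (auto simp: has_prefix_def pre_def)

lemma has_prefix_cat: "has_prefix (cat b t) b"
  by (auto simp: has_prefix_def cat_def)

lemma len_pre[simp]: "length (pre x N) = N"
  by (simp add: pre_def)

lemma x_cat: "x = cat (pre x N) (\<lambda>i. x (i + N))"
  by (auto simp: cat_def pre_def fun_eq_iff)

lemma pre_add: "pre x (N + K) = pre x N @ pre (\<lambda>i. x (i + N)) K"
  by (rule nth_equalityI) (auto simp: pre_def nth_append)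

lemma lin_pre:
  assumes "has_prefix x u" "\<forall>w. f (cat u w) = cat v w" "N \<ge> length u"
  shows "\<forall>w. f (cat (pre x N) w) = cat (v @ pre (\<lambda>i. x (i + length u)) (N - length u)) w"
proof -
  have "pre x N = u @ pre (\<lambda>i. x (i + length u)) (N - length u)"
    using pre_add[of x "length u" "N - length u"] has_prefix_pre[OF assms(1)] assms(3) by simp
  then show ?thesis using assms(2) by (simp flip: cat_append)
qed

lemma prefix_split:
  assumes "has_prefix y p" "has_prefix y b" "length p \<le> length b"
  shows "b = p @ drop (length p) b"
proof -
  have "take (length p) b = p"
    using has_prefix_pre[OF assms(1)] has_prefix_pre[OF assms(2)] assms(3)
    by (metis pre_def take_map take_upt add_0 le_add_diff_inverse min.absorb1)
  then show ?thesis by (metis append_take_drop_id)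
qed

lemma lin_comp:
  assumes "loc_linear A x" "loc_linear B (A x)"
  shows "loc_linear (B \<circ> A) x"
proof -
  obtain a b where ab: "has_prefix x a" "\<forall>w. A (cat a w) = cat b w" using assms(1) loc_linear_def by blast
  obtain p q where pq: "has_prefix (A x) p" "\<forall>w. B (cat p w) = cat q w" using assms(2) loc_linear_def by blast
  define N where "N = length a + length p"
  define b' where "b' = b @ pre (\<lambda>i. x (i + length a)) (N - length a)"
  have A1: "\<forall>w. A (cat (pre x N) w) = cat b' w" using lin_pre[OF ab] N_def b'_def by simp
  have "A x = cat b' (\<lambda>i. x (i + N))" using A1 x_cat[of x N] by metis
  then have "has_prefix (A x) b'" using has_prefix_cat by metis
  moreover have "length b' \<ge> length p" using b'_def N_def by simp
  ultimately have sp: "b' = p @ drop (length p) b'" using prefix_split pq(1) by blast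
  have "\<forall>w. (B \<circ> A) (cat (pre x N) w) = cat (q @ drop (length p) b') w"
    using A1 pq(2) sp by (metis cat_append comp_apply)
  then show ?thesis unfolding loc_linear_def using has_prefix_pre2 by blast
qed

lemma lin_cancel_right:
  assumes "loc_linear (B \<circ> A) x" "loc_linear A x"
  shows "loc_linear B (A x)"
proof -
  obtain u v where uv: "has_prefix x u" "\<forall>w. (B \<circ> A) (cat u w) = cat v w" using assms(1) loc_linear_def by blast
  obtain a b where ab: "has_prefix x a" "\<forall>w. A (cat a w) = cat b w" using assms(2) loc_linear_def by blast
  define N where "N = max (length a) (length u)"
  define b' where "b' = b @ pre (\<lambda>i. x (i + length a)) (N - length a)"
  define v' where "v' = v @ pre (\<lambda>i. x (i + length u)) (N - length u)"
  have A1: "\<forall>w. A (cat (pre x N) w) = cat b' w" using lin_pre[OF ab] N_def b'_def by simp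
  have B1: "\<forall>w. (B \<circ> A) (cat (pre x N) w) = cat v' w" using lin_pre[OF uv] N_def v'_def by simp
  have "\<forall>w. B (cat b' w) = cat v' w" using A1 B1 by (metis comp_apply)
  moreover have "A x = cat b' (\<lambda>i. x (i + N))" using A1 x_cat[of x N] by metis
  then have "has_prefix (A x) b'" using has_prefix_cat by metis
  ultimately show ?thesis unfolding loc_linear_def by blast
qed

lemma lin_cancel_left:
  assumes "loc_linear (C \<circ> D) x" "loc_linear C (D x)" "inj C"
  shows "loc_linear D x"
proof -
  obtain u v where uv: "has_prefix x u" "\<forall>w. (C \<circ> D) (cat u w) = cat v w" using assms(1) loc_linear_def by blast
  obtain p q where pq: "has_prefix (D x) p" "\<forall>w. C (cat p w) = cat q w" using assms(2) loc_linear_def by blast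
  define N where "N = length u + length q"
  define v' where "v' = v @ pre (\<lambda>i. x (i + length u)) (N - length u)"
  have B1: "\<forall>w. (C \<circ> D) (cat (pre x N) w) = cat v' w" using lin_pre[OF uv] N_def v'_def by simp
  have "C (D x) = cat v' (\<lambda>i. x (i + N))" using B1 x_cat[of x N] by (metis comp_apply)
  then have h1: "has_prefix (C (D x)) v'" using has_prefix_cat by metis
  have "D x = cat p (\<lambda>i. D x (i + length p))" using has_prefix_pre[OF pq(1)] x_cat by metis
  then have "C (D x) = cat q (\<lambda>i. D x (i + length p))" using pq(2) by metis
  then have h2: "has_prefix (C (D x)) q" using has_prefix_cat by metis
  have "length v' \<ge> length q" using v'_def N_def by simp
  then have sp: "v' = q @ drop (length q) v'" using prefix_split h1 h2 by blast
  have "\<forall>w. D (cat (pre x N) w) = cat (p @ drop (length q) v') w"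
  proof
    fix w
    have "C (D (cat (pre x N) w)) = C (cat (p @ drop (length q) v') w)"
      using B1 pq(2) sp by (metis cat_append comp_apply)
    then show "D (cat (pre x N) w) = cat (p @ drop (length q) v') w" using assms(3) by (meson injD)
  qed
  then show ?thesis unfolding loc_linear_def using has_prefix_pre2 by blast
qed

lemma fpow_up: "bij f \<Longrightarrow> f (fpow f i x) = fpow f (i + 1) x"
proof (cases "i \<ge> 0")
  case True
  have n: "nat (i + 1) = Suc (nat i)" using True by simp
  have "fpow f (i + 1) x = (f ^^ Suc (nat i)) x" using True n unfolding fpow_def by simp
  also have "\<dots> = f (fpow f i x)" using True unfolding fpow_def by simp
  finally show ?thesis by simp
next
  case False
  assume b: "bij f"
  have "nat (- i) = Suc (nat (- (i + 1)))" using False by simp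
  then have "fpow f i x = inv f (fpow f (i + 1) x)" using False by (simp add: fpow_def)
  then show ?thesis using b by (simp add: bij_is_surj surj_f_inv_f)
qed

lemma fpow_down: "bij f \<Longrightarrow> inv f (fpow f i x) = fpow f (i - 1) x"
proof -
  assume b: "bij f"
  have "f (fpow f (i - 1) x) = fpow f (i - 1 + 1) x" by (rule fpow_up[OF b])
  then have "fpow f i x = f (fpow f (i - 1) x)" by simp
  then show ?thesis using inv_f_f[OF bij_is_inj[OF b]] by simp
qed

lemma fpow_shift:
  assumes "bij f" "fpow f a x = fpow f b x"
  shows "fpow f (a + c) x = fpow f (b + c) x"
proof (induction c rule: int_induct[where k = 0])
  case base then show ?case using assms by simp
next
  case (step1 i)
  have "fpow f (a + i + 1) x = f (fpow f (a + i) x)" using fpow_up[OF assms(1), of "a + i" x] by simp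
  also have "\<dots> = f (fpow f (b + i) x)" using step1(2) by simp
  also have "\<dots> = fpow f (b + i + 1) x" using fpow_up[OF assms(1), of "b + i" x] by simp
  finally show ?case by (simp only: add.assoc)
next
  case (step2 i)
  have "fpow f (a + i - 1) x = inv f (fpow f (a + i) x)" using fpow_down[OF assms(1), of "a + i" x] by simp
  also have "\<dots> = inv f (fpow f (b + i) x)" using step2(2) by simp
  also have "\<dots> = fpow f (b + i - 1) x" using fpow_down[OF assms(1), of "b + i" x] by simp
  finally show ?case by (simp only: add_diff_eq)
qed

lemma funpow_fpow: "bij f \<Longrightarrow> (f ^^ n) (fpow f a x) = fpow f (a + int n) x"
proof (induction n)
  case (Suc n)
  assume b: "bij f"
  have "(f ^^ Suc n) (fpow f a x) = f (fpow f (a + int n) x)" using Suc b by simp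
  also have "\<dots> = fpow f (a + int n + 1) x" by (rule fpow_up[OF b])
  also have "a + int n + 1 = a + int (Suc n)" by simp
  finally show ?case .
qed simp

lemma fpow0[simp]: "fpow f 0 x = x"
  by (simp add: fpow_def)

lemma orbit_range: "orbit f x = range (\<lambda>i. fpow f i x)"
  by (auto simp: orbit_def)

lemma period:
  assumes "bij f" "p > 0" "fpow f p x = x"
  shows "orbit f x \<subseteq> (\<lambda>i. fpow f i x) ` {0..<p}"
proof -
  have per: "fpow f (r + p * q) x = fpow f r x" for r q
  proof (induction q rule: int_induct[where k = 0])
    case base then show ?case by simp
  next
    case (step1 i)
    have "fpow f (p + (r + p * i)) x = fpow f (0 + (r + p * i)) x"
      by (rule fpow_shift[OF assms(1)]) (use assms(3) in simp)
    then show ?case using step1 by (simp add: algebra_simps)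
  next
    case (step2 i)
    have "fpow f (0 + (r + p * (i - 1))) x = fpow f (p + (r + p * (i - 1))) x"
      by (rule fpow_shift[OF assms(1)]) (use assms(3) in simp)
    then show ?case using step2 by (simp add: algebra_simps)
  qed
  show ?thesis
  proof
    fix y assume "y \<in> orbit f x"
    then obtain c where c: "y = fpow f c x" by (auto simp: orbit_def)
    have "c = c mod p + p * (c div p)" by simp
    then have "y = fpow f (c mod p) x" using per c by metis
    moreover have "c mod p \<in> {0..<p}" using assms(2) by simp
    ultimately show "y \<in> (\<lambda>i. fpow f i x) ` {0..<p}" by blast
  qed
qed

lemma no_return:
  assumes "bij f" "j \<noteq> 0" "fpow f j x = x"
  shows "finite (orbit f x) \<and> card (orbit f x) \<le> nat \<bar>j\<bar>"
proof -
  have "fpow f \<bar>j\<bar> x = x"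
  proof (cases "j > 0")
    case False
    have "fpow f (0 + - j) x = fpow f (j + - j) x"
      by (rule fpow_shift[OF assms(1)]) (use assms(3) in simp)
    then show ?thesis using False by simp
  qed (use assms in simp)
  then have sub: "orbit f x \<subseteq> (\<lambda>i. fpow f i x) ` {0..<\<bar>j\<bar>}"
    using period[OF assms(1)] assms(2) by simp
  moreover have "card ((\<lambda>i. fpow f i x) ` {0..<\<bar>j\<bar>}) \<le> nat \<bar>j\<bar>"
    using card_image_le[of "{0..<\<bar>j\<bar>}" "\<lambda>i. fpow f i x"] by simp
  moreover have fin: "finite ((\<lambda>i. fpow f i x) ` {0..<\<bar>j\<bar>})" by simp
  ultimately show ?thesis using card_mono[OF fin sub] finite_subset[OF sub fin] by linarith
qed


theorem mainTheorem7:
  fixes f :: "cantor \<Rightarrow> cantor" and s0 :: cantor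
  assumes "VA f"
    and "s0 \<in> Sing f"
    and "Sing f \<inter> orbit f s0 = {s0}"
  shows "(infinite (orbit f s0) \<longrightarrow>
            (\<forall>n::nat. 1 \<le> n \<longrightarrow>
               Sing (f ^^ n) \<inter> orbit f s0 = {fpow f (- int k) s0 | k. k < n}) \<and>
            (\<forall>n::nat. 1 \<le> n \<longrightarrow> f ^^ n \<noteq> id) \<and>
            (\<forall>n::nat. 1 \<le> n \<longrightarrow> (\<exists>S. S \<subseteq> Sing (f ^^ n) \<and> finite S \<and> card S = n)))
       \<and> (\<forall>m. finite (orbit f s0) \<and> card (orbit f s0) = m \<longrightarrow>
            (\<forall>n::nat. 1 \<le> n \<and> n \<le> m \<longrightarrow>
               Sing (f ^^ n) \<inter> orbit f s0 = {fpow f (- int k) s0 | k. k < n}) \<and>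
            s0 \<in> Sing (f ^^ m) \<and> (f ^^ m) s0 = s0)"
proof -
  have b: "bij f" using assms(1) VA_def by blast
  define s where "s = (\<lambda>i. fpow f i s0)"
  have orb: "orbit f s0 = range s" unfolding s_def by (rule orbit_range)
  have s0: "s 0 = s0" by (simp add: s_def)
  have shift: "s (a + c) = s (b + c)" if "s a = s b" for a b c
    using fpow_shift[OF b] that unfolding s_def by blast
  have fs: "(f ^^ n) (s a) = s (a + int n)" for n a
    unfolding s_def by (rule funpow_fpow[OF b])
  have notsing: "s i \<notin> Sing f" if "s i \<noteq> s 0" for i
  proof
    assume "s i \<in> Sing f"
    moreover have "s i \<in> orbit f s0" using orb by simp
    ultimately have "s i \<in> {s0}" using assms(3) by blast
    then show False using that s0 by simp
  qed
  have L1: "loc_linear (f ^^ n) (s j)" if "\<forall>i<n. s (j + int i) \<notin> Sing f" for n j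
    using that
  proof (induction n)
    case 0
    have "\<forall>w. id (cat [] w) = cat [] w" by (simp add: cat_Nil)
    then have "loc_linear id (s j)" unfolding loc_linear_def has_prefix_def by (metis list.size(3) not_less0)
    then show ?case by (simp add: id_def)
  next
    case (Suc n)
    have "loc_linear (f ^^ n) (s j)" using Suc by simp
    moreover have "loc_linear f ((f ^^ n) (s j))" using Suc.prems fs[of n j] by (simp add: Sing_def)
    ultimately have "loc_linear (f \<circ> f ^^ n) (s j)" by (rule lin_comp)
    then show ?case by (simp only: funpow.simps)
  qed
  have L2: "\<exists>k<n. s j = s (- int k)" if "s j \<in> Sing (f ^^ n)" for j n
  proof (rule ccontr)
    assume nk: "\<not> (\<exists>k<n. s j = s (- int k))"
    have "\<forall>i<n. s (j + int i) \<notin> Sing f"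
    proof (intro allI impI)
      fix i assume i: "i < n"
      show "s (j + int i) \<notin> Sing f"
      proof
        assume "s (j + int i) \<in> Sing f"
        then have "s (j + int i) = s (0 + 0)" using notsing by auto
        then have "s (j + int i + - int i) = s (0 + 0 + - int i)" by (rule shift)
        then show False using nk i by auto
      qed
    qed
    then show False using L1 that by (simp add: Sing_def)
  qed
  have L3: "s (- int k) \<in> Sing (f ^^ n)"
    if nr: "\<forall>j. 0 < \<bar>j\<bar> \<and> \<bar>j\<bar> < int n \<longrightarrow> s j \<noteq> s 0" and k: "k < n" for k n
  proof (rule ccontr)
    assume lin: "s (- int k) \<notin> Sing (f ^^ n)"
    have eq: "f ^^ n = (f ^^ (n - 1 - k)) \<circ> (f \<circ> f ^^ k)"
    proof -
      have "n = (n - 1 - k) + Suc k" using k by simp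
      then have "f ^^ n = f ^^ (n - 1 - k) \<circ> f ^^ (Suc k)" by (metis funpow_add)
      then show ?thesis by simp
    qed
    have A: "loc_linear (f ^^ k) (s (- int k))"
    proof (rule L1, intro allI impI)
      fix i assume "i < k"
      then have "s (- int k + int i) \<noteq> s 0" using nr k by auto
      then show "s (- int k + int i) \<notin> Sing f" by (rule notsing)
    qed
    have Ax: "(f \<circ> f ^^ k) (s (- int k)) = s 1" using fs[of k] fs[of 1] by simp
    have C: "loc_linear (f ^^ (n - 1 - k)) (s 1)"
    proof (rule L1, intro allI impI)
      fix i assume "i < n - 1 - k"
      then have "s (1 + int i) \<noteq> s 0" using nr k by auto
      then show "s (1 + int i) \<notin> Sing f" by (rule notsing)
    qed
    have inj: "inj (f ^^ (n - 1 - k))" using b by (simp add: bij_is_inj)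
    have "loc_linear (f \<circ> f ^^ k) (s (- int k))"
      using lin_cancel_left[of "f ^^ (n - 1 - k)" "f \<circ> f ^^ k" "s (- int k)"] lin eq C Ax inj
      by (simp add: Sing_def)
    then have "loc_linear f ((f ^^ k) (s (- int k)))" using lin_cancel_right A by blast
    then show False using fs[of k "- int k"] s0 assms(2) by (simp add: Sing_def)
  qed
  have main: "Sing (f ^^ n) \<inter> orbit f s0 = {fpow f (- int k) s0 | k. k < n}"
    if nr: "\<forall>j. 0 < \<bar>j\<bar> \<and> \<bar>j\<bar> < int n \<longrightarrow> s j \<noteq> s 0" for n
  proof
    show "Sing (f ^^ n) \<inter> orbit f s0 \<subseteq> {fpow f (- int k) s0 | k. k < n}"
    proof
      fix x assume x: "x \<in> Sing (f ^^ n) \<inter> orbit f s0"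
      then obtain j where j: "x = s j" using orb by auto
      then obtain k where "k < n" "s j = s (- int k)" using L2 x by blast
      then show "x \<in> {fpow f (- int k) s0 | k. k < n}" using j unfolding s_def by blast
    qed
    show "{fpow f (- int k) s0 | k. k < n} \<subseteq> Sing (f ^^ n) \<inter> orbit f s0"
      using L3[OF nr] orb unfolding s_def by auto
  qed
  have nret: "finite (orbit f s0) \<and> card (orbit f s0) \<le> nat \<bar>j\<bar>" if "j \<noteq> 0" "s j = s 0" for j
    using no_return[OF b that(1)] that(2) s0 unfolding s_def by simp
  have idlin: "loc_linear id x" for x
  proof -
    have "\<forall>w. id (cat [] w) = cat [] w" by (simp add: cat_Nil)
    then show ?thesis unfolding loc_linear_def has_prefix_def by (metis list.size(3) not_less0)
  qed
  have partA: "(\<forall>n::nat. 1 \<le> n \<longrightarrow>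
               Sing (f ^^ n) \<inter> orbit f s0 = {fpow f (- int k) s0 | k. k < n}) \<and>
            (\<forall>n::nat. 1 \<le> n \<longrightarrow> f ^^ n \<noteq> id) \<and>
            (\<forall>n::nat. 1 \<le> n \<longrightarrow> (\<exists>S. S \<subseteq> Sing (f ^^ n) \<and> finite S \<and> card S = n))"
    if inf: "infinite (orbit f s0)"
  proof -
    have nr: "\<forall>j. 0 < \<bar>j\<bar> \<and> \<bar>j\<bar> < int n \<longrightarrow> s j \<noteq> s 0" for n
    proof (intro allI impI)
      fix j assume "0 < \<bar>j\<bar> \<and> \<bar>j\<bar> < int n"
      then have "j \<noteq> 0" by auto
      then show "s j \<noteq> s 0" using nret[of j] inf by blast
    qed
    have injs: "inj s"
    proof
      fix a b assume "s a = s b"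
      then have "s (a + - b) = s (b + - b)" by (rule shift)
      then have "s (a - b) = s 0" by simp
      then show "a = b" using nret[of "a - b"] inf by (cases "a = b") auto
    qed
    have sing: "s (- int k) \<in> Sing (f ^^ n)" if "k < n" for k n
      using L3[OF nr that] .
    show ?thesis
    proof (intro conjI allI impI)
      fix n :: nat assume "1 \<le> n"
      show "Sing (f ^^ n) \<inter> orbit f s0 = {fpow f (- int k) s0 | k. k < n}" using main nr by blast
      show "f ^^ n \<noteq> id"
      proof
        assume "f ^^ n = id"
        then show False using sing[of 0 n] \<open>1 \<le> n\<close> idlin by (simp add: Sing_def)
      qed
      let ?S = "(\<lambda>k. s (- int k)) ` {..<n}"
      have "inj_on (\<lambda>k. s (- int k)) {..<n}"
      proof (rule inj_onI)
        fix x y assume "x \<in> {..<n}" "y \<in> {..<n}" "s (- int x) = s (- int y)"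
        then have "- int x = - int y" using injs by (meson injD)
        then show "x = y" by simp
      qed
      then have "card ?S = n" by (simp add: card_image)
      moreover have "?S \<subseteq> Sing (f ^^ n)" using sing by auto
      ultimately show "\<exists>S. S \<subseteq> Sing (f ^^ n) \<and> finite S \<and> card S = n" by blast
    qed
  qed
  have partB: "(\<forall>n::nat. 1 \<le> n \<and> n \<le> m \<longrightarrow>
               Sing (f ^^ n) \<inter> orbit f s0 = {fpow f (- int k) s0 | k. k < n}) \<and>
            s0 \<in> Sing (f ^^ m) \<and> (f ^^ m) s0 = s0"
    if fin: "finite (orbit f s0)" and cm: "card (orbit f s0) = m" for m
  proof -
    have nr: "\<forall>j. 0 < \<bar>j\<bar> \<and> \<bar>j\<bar> < int n \<longrightarrow> s j \<noteq> s 0" if "n \<le> m" for n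
    proof (intro allI impI notI)
      fix j assume j: "0 < \<bar>j\<bar> \<and> \<bar>j\<bar> < int n" and e: "s j = s 0"
      then have "j \<noteq> 0" by auto
      then have "card (orbit f s0) \<le> nat \<bar>j\<bar>" using nret e by blast
      then show False using j cm that by linarith
    qed
    have "s 0 \<in> orbit f s0" using orb by simp
    then have "card (orbit f s0) > 0" using fin card_gt_0_iff by blast
    then have m1: "m \<ge> 1" using cm by simp
    have "\<not> inj_on s {0..int m}"
    proof
      assume "inj_on s {0..int m}"
      then have "card (s ` {0..int m}) = m + 1" by (simp add: card_image)
      moreover have "s ` {0..int m} \<subseteq> orbit f s0" using orb by auto
      ultimately have "card (s ` {0..int m}) \<le> card (orbit f s0)" using card_mono[OF fin] by blast
      then show False using cm \<open>card (s ` {0..int m}) = m + 1\<close> by linarith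
    qed
    then obtain a c where ac: "a \<in> {0..int m}" "c \<in> {0..int m}" "a < c" "s a = s c"
    proof -
      obtain a c where "a \<in> {0..int m}" "c \<in> {0..int m}" "a \<noteq> c" "s a = s c"
        using \<open>\<not> inj_on s {0..int m}\<close> unfolding inj_on_def by blast
      then show ?thesis using that by (cases "a < c") auto
    qed
    then have "s (a + - a) = s (c + - a)" using shift by blast
    then have "s (c - a) = s 0" by simp
    moreover have "\<not> (c - a < int m)"
    proof
      assume "c - a < int m"
      then have "s (c - a) \<noteq> s 0" using nr[OF order_refl] ac(3) by auto
      then show False using \<open>s (c - a) = s 0\<close> by simp
    qed
    moreover have "c - a \<le> int m" using ac by auto
    ultimately have "c - a = int m" by linarith
    then have ret: "s (int m) = s 0" using \<open>s (c - a) = s 0\<close> by simp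
    show ?thesis
    proof (intro conjI allI impI)
      fix n :: nat assume "1 \<le> n \<and> n \<le> m"
      then show "Sing (f ^^ n) \<inter> orbit f s0 = {fpow f (- int k) s0 | k. k < n}" using main nr by blast
    next
      show "s0 \<in> Sing (f ^^ m)" using L3[OF nr[OF order_refl], of 0] m1 s0 by simp
      show "(f ^^ m) s0 = s0" using fs[of m 0] ret s0 by simp
    qed
  qed
  show ?thesis using partA partB by blast
qed

end
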